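(* Let $\Phi:\ell^\infty(\mathbb Z)\to\ell^\infty(\mathbb Z)$ be a linear map commuting with the backward shift $B$, $(Bv)_n=v_{n+1}$. If $\Phi$ is idempotent and contractive, then either $\Phi=\Phi^{s}$ (i.e. $\Phi$ annihilates $c_0(\mathbb Z)$) or $\Phi$ is the identity map.
   Context: For such $\Phi$, let $\phi_0(v)=\Phi(v)_0$, so $\Phi(v)_n=\phi_0(B^nv)$. Write $\phi_0=\phi^{ac}+\phi^s$ with $\phi^{ac}$ weak*-continuous (given by an $\ell^1(\mathbb Z)$ vector) and $\phi^s$ vanishing on $c_0(\mathbb Z)$ (the null sequences), and set $\Phi^{s}(v)=(\phi^s(B^nv))_n$. *)

theory Defs
  imports "HOL-Analysis.Analysis"
begin

definition linf :: "(int \<Rightarrow> complex) set" where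
  "linf = {v. bounded (range v)}"

definition c0 :: "(int \<Rightarrow> complex) set" where
  "c0 = {v. \<forall>e>0. finite {n. norm (v n) \<ge> e}}"

definition supnorm :: "(int \<Rightarrow> complex) \<Rightarrow> real" where
  "supnorm v = (SUP n. norm (v n))"

definition bshift :: "(int \<Rightarrow> complex) \<Rightarrow> (int \<Rightarrow> complex)" where
  "bshift v = (\<lambda>n. v (n + 1))"

text \<open>A linear map on linf (values outside linf are irrelevant).\<close>
definition linear_on_linf :: "((int \<Rightarrow> complex) \<Rightarrow> (int \<Rightarrow> complex)) \<Rightarrow> bool" where
  "linear_on_linf \<Phi> \<longleftrightarrow> (\<forall>v\<in>linf. \<Phi> v \<in> linf) \<and>
     (\<forall>u\<in>linf. \<forall>v\<in>linf. \<Phi> (\<lambda>n. u n + v n) = (\<lambda>n. \<Phi> u n + \<Phi> v n)) \<and>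
     (\<forall>a. \<forall>v\<in>linf. \<Phi> (\<lambda>n. a * v n) = (\<lambda>n. a * \<Phi> v n))"

end

theory Submission
  imports Defs
begin

lemma linf_iff: "v \<in> linf \<longleftrightarrow> (\<exists>B. \<forall>n. norm (v n) \<le> B)"
  unfolding linf_def by (auto simp: bounded_iff)

lemma linf_add: "u \<in> linf \<Longrightarrow> v \<in> linf \<Longrightarrow> (\<lambda>n. u n + v n) \<in> linf"
proof -
  assume "u \<in> linf" "v \<in> linf"
  then obtain A B where "\<forall>n. norm (u n) \<le> A" "\<forall>n. norm (v n) \<le> B" by (auto simp: linf_iff)
  then have "\<forall>n. norm (u n + v n) \<le> A + B" by (meson add_mono norm_triangle_le)
  then show ?thesis by (auto simp: linf_iff)
qed

lemma linf_scale: "v \<in> linf \<Longrightarrow> (\<lambda>n. c * v n) \<in> linf"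
proof -
  assume "v \<in> linf"
  then obtain B where "\<forall>n. norm (v n) \<le> B" by (auto simp: linf_iff)
  then have "\<forall>n. norm (c * v n) \<le> norm c * B" by (simp add: mult_left_mono norm_mult)
  then show ?thesis by (auto simp: linf_iff)
qed

lemma linf_diff: "u \<in> linf \<Longrightarrow> v \<in> linf \<Longrightarrow> (\<lambda>n. u n - v n) \<in> linf"
  using linf_add[of u "\<lambda>n. (-1) * v n"] linf_scale[of v "-1"] by simp

lemma supnorm_upper: "v \<in> linf \<Longrightarrow> norm (v n) \<le> supnorm v"
  unfolding supnorm_def
  by (rule cSUP_upper) (auto simp: linf_iff bdd_above_def)

lemma supnorm_least: "(\<And>n. norm (v n) \<le> B) \<Longrightarrow> supnorm v \<le> B"
  unfolding supnorm_def by (rule cSUP_least) auto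

definition ee :: "int \<Rightarrow> int \<Rightarrow> complex" where "ee k = (\<lambda>m. if m = k then 1 else 0)"

lemma ee_linf: "ee k \<in> linf"
  unfolding linf_iff ee_def by (rule exI[of _ 1]) auto

lemma sum_ee: "finite F \<Longrightarrow> (\<Sum>k\<in>F. c k * ee k m) = (if m \<in> F then c m else 0)"
  unfolding ee_def by (simp add: if_distrib cong: if_cong)

lemma sum_linf: "finite F \<Longrightarrow> (\<lambda>m. \<Sum>k\<in>F. c k * ee k m) \<in> linf"
proof (induction F rule: finite_induct)
  case empty then show ?case by (auto simp: linf_iff)
next
  case (insert x F)
  have "(\<lambda>m. c x * ee x m + (\<Sum>k\<in>F. c k * ee k m)) \<in> linf"
    by (intro linf_add linf_scale ee_linf insert)
  then show ?case using insert by simp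
qed

locale ctx =
  fixes \<Phi> :: "(int \<Rightarrow> complex) \<Rightarrow> (int \<Rightarrow> complex)"
  assumes lin: "linear_on_linf \<Phi>"
    and comm: "\<forall>v\<in>linf. \<Phi> (bshift v) = bshift (\<Phi> v)"
    and idem: "\<forall>v\<in>linf. \<Phi> (\<Phi> v) = \<Phi> v"
    and contr: "\<forall>v\<in>linf. supnorm (\<Phi> v) \<le> supnorm v"
begin

lemma Plinf: "v \<in> linf \<Longrightarrow> \<Phi> v \<in> linf" using lin unfolding linear_on_linf_def by blast
lemma Padd: "u \<in> linf \<Longrightarrow> v \<in> linf \<Longrightarrow> \<Phi> (\<lambda>n. u n + v n) = (\<lambda>n. \<Phi> u n + \<Phi> v n)"
  using lin unfolding linear_on_linf_def by blast
lemma Pscale: "v \<in> linf \<Longrightarrow> \<Phi> (\<lambda>n. c * v n) = (\<lambda>n. c * \<Phi> v n)"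
  using lin unfolding linear_on_linf_def by blast
lemma P0: "\<Phi> (\<lambda>n. 0) = (\<lambda>n. 0)"
proof -
  have "(\<lambda>n::int. 0::complex) \<in> linf" by (auto simp: linf_iff)
  from Pscale[OF this, of 0] show ?thesis by simp
qed
lemma Pdiff: "u \<in> linf \<Longrightarrow> v \<in> linf \<Longrightarrow> \<Phi> (\<lambda>n. u n - v n) = (\<lambda>n. \<Phi> u n - \<Phi> v n)"
proof -
  assume u: "u \<in> linf" and v: "v \<in> linf"
  have "\<Phi> (\<lambda>n. u n + (-1) * v n) = (\<lambda>n. \<Phi> u n + \<Phi> (\<lambda>n. (-1) * v n) n)"
    by (rule Padd[OF u linf_scale[OF v]])
  also have "\<Phi> (\<lambda>n. (-1) * v n) = (\<lambda>n. (-1) * \<Phi> v n)" by (rule Pscale[OF v])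
  finally show ?thesis by simp
qed

lemma norm_le: "v \<in> linf \<Longrightarrow> norm (\<Phi> v n) \<le> supnorm v"
  using supnorm_upper[OF Plinf, of v n] contr by fastforce

definition "a = \<Phi> (ee 0)"

lemma Pee: "\<Phi> (ee k) n = a (n - k)"
proof -
  have sh: "\<Phi> (ee (k - 1)) n = \<Phi> (ee k) (n + 1)" for k n
  proof -
    have "bshift (ee k) = ee (k - 1)" unfolding bshift_def ee_def by auto
    then show ?thesis using comm ee_linf[of k] unfolding bshift_def by metis
  qed
  have "\<forall>n. \<Phi> (ee k) n = a (n - k)"
  proof (induction k rule: int_induct[where k=0])
    case base
    then show ?case by (simp add: a_def)
  next
    case (step1 i)
    show ?case
    proof
      fix n
      have "\<Phi> (ee (i + 1)) n = \<Phi> (ee i) (n - 1)" using sh[of "i+1" "n-1"] by simp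
      then show "\<Phi> (ee (i + 1)) n = a (n - (i + 1))" using step1 by (simp add: algebra_simps)
    qed
  next
    case (step2 i)
    show ?case
    proof
      fix n
      show "\<Phi> (ee (i - 1)) n = a (n - (i - 1))" using sh[of i n] step2 by (simp add: algebra_simps)
    qed
  qed
  then show ?thesis by blast
qed

lemma Psum: "finite F \<Longrightarrow> \<Phi> (\<lambda>m. \<Sum>k\<in>F. c k * ee k m) = (\<lambda>n. \<Sum>k\<in>F. c k * a (n - k))"
proof (induction F rule: finite_induct)
  case empty
  then show ?case using P0 by simp
next
  case (insert x F)
  have "\<Phi> (\<lambda>m. \<Sum>k\<in>insert x F. c k * ee k m) = \<Phi> (\<lambda>m. c x * ee x m + (\<Sum>k\<in>F. c k * ee k m))"
    using insert by simp
  also have "\<dots> = (\<lambda>n. \<Phi> (\<lambda>m. c x * ee x m) n + \<Phi> (\<lambda>m. \<Sum>k\<in>F. c k * ee k m) n)"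
    by (rule Padd) (auto intro: linf_scale ee_linf sum_linf insert)
  also have "\<dots> = (\<lambda>n. \<Sum>k\<in>insert x F. c k * a (n - k))"
    using insert by (simp add: Pscale[OF ee_linf] Pee)
  finally show ?case .
qed

lemma decomp:
  assumes v: "v \<in> linf" and F: "finite F" and B: "\<And>m. m \<notin> F \<Longrightarrow> norm (v m) \<le> B" "B \<ge> 0"
  shows "norm (\<Phi> v n - (\<Sum>k\<in>F. v k * a (n - k))) \<le> B"
proof -
  define t where "t = (\<lambda>m. v m - (\<Sum>k\<in>F. v k * ee k m))"
  have tl: "t \<in> linf" unfolding t_def by (intro linf_diff v sum_linf F)
  have "\<Phi> t = (\<lambda>n. \<Phi> v n - \<Phi> (\<lambda>m. \<Sum>k\<in>F. v k * ee k m) n)"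
    unfolding t_def by (intro Pdiff v sum_linf F)
  then have "\<Phi> v n - (\<Sum>k\<in>F. v k * a (n - k)) = \<Phi> t n" using Psum[OF F, of v] by simp
  also have "norm (\<Phi> t n) \<le> supnorm t" by (rule norm_le[OF tl])
  also have "supnorm t \<le> B"
    by (rule supnorm_least) (auto simp: t_def sum_ee F B)
  finally show ?thesis .
qed


lemma a_linf: "a \<in> linf" unfolding a_def by (rule Plinf[OF ee_linf])

lemma sgn_mult: "cnj (sgn z) * z = complex_of_real (norm z)"
proof (cases "z = 0")
  case False
  have "cnj (sgn z) * z = cnj z * z / complex_of_real (norm z)"
    by (simp add: sgn_div_norm scaleR_conv_of_real divide_inverse mult_ac)
  also have "cnj z * z = complex_of_real (norm z)^2" by (metis complex_norm_square mult.commute of_real_power)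
  finally show ?thesis using False by (simp add: power2_eq_square)
qed simp

lemma sumbound: "finite F \<Longrightarrow> (\<Sum>j\<in>F. norm (a j)) \<le> 1"
proof -
  assume F: "finite F"
  define G where "G = uminus ` F"
  have G: "finite G" using F by (simp add: G_def)
  define c where "c k = cnj (sgn (a (- k)))" for k
  define v where "v = (\<lambda>m. \<Sum>k\<in>G. c k * ee k m)"
  have vl: "v \<in> linf" unfolding v_def by (rule sum_linf[OF G])
  have "\<Phi> v 0 = (\<Sum>k\<in>G. c k * a (0 - k))" unfolding v_def using Psum[OF G] by simp
  also have "\<dots> = (\<Sum>k\<in>G. complex_of_real (norm (a (- k))))" unfolding c_def by (simp add: sgn_mult)
  also have "\<dots> = (\<Sum>j\<in>F. complex_of_real (norm (a j)))"
    unfolding G_def by (subst sum.reindex) (auto simp: inj_on_def)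
  finally have e: "\<Phi> v 0 = complex_of_real (\<Sum>j\<in>F. norm (a j))" by simp
  have "norm (\<Phi> v 0) \<le> supnorm v" by (rule norm_le[OF vl])
  also have "supnorm v \<le> 1"
    by (rule supnorm_least) (auto simp: v_def sum_ee G c_def norm_sgn)
  finally have "norm (\<Phi> v 0) \<le> 1" .
  then have "norm (\<Sum>j\<in>F. complex_of_real (norm (a j))) \<le> 1" using e by simp
  then show ?thesis by (simp only: of_real_sum[symmetric] norm_of_real)
qed

lemma afin: "e > 0 \<Longrightarrow> finite {j. norm (a j) \<ge> e}"
proof (rule ccontr)
  assume e: "e > 0" and inf: "infinite {j. norm (a j) \<ge> e}"
  obtain N :: nat where N: "real N > 1 / e" using reals_Archimedean2 by blast
  obtain F where F: "finite F" "F \<subseteq> {j. norm (a j) \<ge> e}" "card F = N"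
    using infinite_arbitrarily_large[OF inf] by blast
  have "real N * e = (\<Sum>j\<in>F. e)" using F by simp
  also have "\<dots> \<le> (\<Sum>j\<in>F. norm (a j))" using F by (intro sum_mono) auto
  also have "\<dots> \<le> 1" by (rule sumbound[OF F(1)])
  finally have "real N * e \<le> 1" .
  with N e show False by (simp add: field_simps)
qed


lemma c0_linf: "v \<in> c0 \<Longrightarrow> v \<in> linf"
proof -
  assume "v \<in> c0"
  then have F: "finite {n. norm (v n) \<ge> 1}" unfolding c0_def by auto
  have "norm (v n) \<le> 1 + (\<Sum>j\<in>{n. norm (v n) \<ge> 1}. norm (v j))" for n
  proof (cases "norm (v n) \<ge> 1")
    case True
    then have "norm (v n) \<le> (\<Sum>j\<in>{n. norm (v n) \<ge> 1}. norm (v j))"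
      using member_le_sum[OF _ _ F, of n "\<lambda>j. norm (v j)"] by auto
    then show ?thesis by simp
  next
    case False
    then show ?thesis using sum_nonneg[of _ "\<lambda>j. norm (v j)"] by (smt (verit) norm_ge_zero)
  qed
  then show ?thesis unfolding linf_iff by blast
qed

lemma zero_case:
  assumes z: "\<forall>j. a j = 0"
  shows "\<forall>v\<in>c0. \<Phi> v = (\<lambda>n. 0)"
proof (intro ballI ext)
  fix v n assume v: "v \<in> c0"
  have "norm (\<Phi> v n) \<le> e" if e: "e > 0" for e
  proof -
    have F: "finite {m. norm (v m) \<ge> e}" using v e unfolding c0_def by auto
    have "norm (\<Phi> v n - (\<Sum>k\<in>{m. norm (v m) \<ge> e}. v k * a (n - k))) \<le> e"
      by (rule decomp[OF c0_linf[OF v] F]) (use e in auto)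
    then show ?thesis using z by simp
  qed
  then have "norm (\<Phi> v n) \<le> 0" by (meson dense not_le)
  then show "\<Phi> v n = 0" by simp
qed

lemma ident_case:
  assumes ae: "a = ee 0"
  shows "\<forall>v\<in>linf. \<Phi> v = v"
proof (intro ballI ext)
  fix v n assume v: "v \<in> linf"
  have Pe: "\<Phi> (ee n) = ee n" using Pee ae by (auto simp: ee_def)
  define w where "w = (\<lambda>m. v m - v n * ee n m)"
  have wl: "w \<in> linf" unfolding w_def by (intro linf_diff v linf_scale ee_linf)
  have Pw: "\<Phi> w = (\<lambda>m. \<Phi> v m - v n * ee n m)"
    unfolding w_def by (simp add: Pdiff[OF v linf_scale[OF ee_linf]] Pscale[OF ee_linf] Pe)
  define c where "c = \<Phi> w n"
  have c: "c = \<Phi> v n - v n" unfolding c_def Pw by (simp add: ee_def)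
  show "\<Phi> v n = v n"
  proof (rule ccontr)
    assume "\<Phi> v n \<noteq> v n"
    then have c0: "c \<noteq> 0" using c by simp
    define s where "s = supnorm w"
    have cs: "norm c \<le> s" unfolding c_def s_def by (rule norm_le[OF wl])
    then have sp: "s > 0" using c0 by (smt (verit) zero_less_norm_iff)
    define d where "d = cnj c / complex_of_real (norm c * s)"
    define u where "u = (\<lambda>m. ee n m + d * w m)"
    have ul: "u \<in> linf" unfolding u_def by (intro linf_add ee_linf linf_scale wl)
    have "\<Phi> u = (\<lambda>m. \<Phi> (ee n) m + d * \<Phi> w m)"
      unfolding u_def by (simp add: Padd[OF ee_linf linf_scale[OF wl]] Pscale[OF wl])
    then have "\<Phi> u n = 1 + d * c" using Pe by (simp add: ee_def c_def)
    also have "d * c = complex_of_real (norm c / s)"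
      unfolding d_def using c0 sp
      by (simp add: field_simps complex_norm_square[symmetric] power2_eq_square)
    finally have Pun: "\<Phi> u n = complex_of_real (1 + norm c / s)" by simp
    have "norm (u m) \<le> 1" for m
    proof (cases "m = n")
      case True
      then show ?thesis by (simp add: u_def w_def ee_def)
    next
      case False
      have "norm (w m) \<le> s" unfolding s_def by (rule supnorm_upper[OF wl])
      then have "norm (d * w m) \<le> 1" unfolding d_def using c0 sp
        by (simp add: norm_mult norm_divide field_simps)
      then show ?thesis using False by (simp add: u_def ee_def)
    qed
    then have "supnorm u \<le> 1" by (rule supnorm_least)
    then have "norm (\<Phi> u n) \<le> 1" using norm_le[OF ul, of n] by simp
    moreover have "norm (\<Phi> u n) > 1"
    proof -
      have "norm c / s > 0" using c0 sp by simp
      then have "norm (complex_of_real (1 + norm c / s)) = 1 + norm c / s"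
        by (simp only: norm_of_real)
      then show ?thesis unfolding Pun using \<open>norm c / s > 0\<close> by simp
    qed
    ultimately show False by simp
  qed
qed


lemma Pa: "\<Phi> a = a" unfolding a_def using idem ee_linf by blast

lemma nonzero_case:
  assumes j0: "a j0 \<noteq> 0"
  shows "a = ee 0"
proof -
  define M where "M = {j. norm (a j) \<ge> norm (a j0)}"
  have Mf: "finite M" unfolding M_def by (rule afin) (use j0 in simp)
  have "j0 \<in> M" unfolding M_def by simp
  then have "Max ((\<lambda>j. norm (a j)) ` M) \<in> (\<lambda>j. norm (a j)) ` M" using Mf by (intro Max_in) auto
  then obtain n0 where n0M: "n0 \<in> M" "norm (a n0) = Max ((\<lambda>j. norm (a j)) ` M)" by auto
  have n0: "n0 \<in> M" "\<And>j. j \<in> M \<Longrightarrow> norm (a j) \<le> norm (a n0)"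
    using n0M Mf by auto
  define p where "p = norm (a n0)"
  have pmax: "norm (a j) \<le> p" for j
    using n0 \<open>j0 \<in> M\<close> by (cases "j \<in> M") (force simp: M_def p_def)+
  have pp: "p > 0" using n0(1) j0 unfolding M_def p_def by (smt (verit) mem_Collect_eq zero_less_norm_iff)
  have key: "norm (a (n0 - k)) = p" if ak: "a k \<noteq> 0" for k
  proof (rule ccontr)
    assume "norm (a (n0 - k)) \<noteq> p"
    then have lt: "norm (a (n0 - k)) < p" using pmax[of "n0 - k"] by simp
    define \<delta> where "\<delta> = norm (a k) * (p - norm (a (n0 - k)))"
    have dp: "\<delta> > 0" unfolding \<delta>_def using ak lt by simp
    define F where "F = insert k {j. norm (a j) \<ge> \<delta> / 2}"
    have Ff: "finite F" unfolding F_def using afin[of "\<delta>/2"] dp by simp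
    have "norm (\<Phi> a n0 - (\<Sum>j\<in>F. a j * a (n0 - j))) \<le> \<delta> / 2"
      by (rule decomp[OF a_linf Ff]) (use dp in \<open>auto simp: F_def\<close>)
    then have d1: "norm (a n0 - (\<Sum>j\<in>F. a j * a (n0 - j))) \<le> \<delta> / 2" using Pa by simp
    have "norm (\<Sum>j\<in>F. a j * a (n0 - j)) \<le> (\<Sum>j\<in>F. norm (a j) * norm (a (n0 - j)))"
      by (rule order_trans[OF norm_sum]) (simp add: norm_mult)
    also have "\<dots> \<le> (\<Sum>j\<in>F. norm (a j) * p - (if j = k then \<delta> else 0))"
    proof (rule sum_mono)
      fix j assume "j \<in> F"
      show "norm (a j) * norm (a (n0 - j)) \<le> norm (a j) * p - (if j = k then \<delta> else 0)"
        using pmax[of "n0 - j"] mult_left_mono[OF pmax[of "n0 - j"] norm_ge_zero[of "a j"]]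
        by (cases "j = k") (simp_all add: \<delta>_def algebra_simps)
    qed
    also have "\<dots> = (\<Sum>j\<in>F. norm (a j)) * p - \<delta>"
      using Ff by (simp add: sum_subtractf sum_distrib_right F_def)
    also have "\<dots> \<le> p - \<delta>" using mult_right_mono[OF sumbound[OF Ff], of p] pp by simp
    finally have "norm (\<Sum>j\<in>F. a j * a (n0 - j)) \<le> p - \<delta>" .
    moreover have "norm (a n0) \<le> norm (\<Sum>j\<in>F. a j * a (n0 - j)) + norm (a n0 - (\<Sum>j\<in>F. a j * a (n0 - j)))"
      by (rule norm_triangle_sub)
    ultimately have "norm (a n0) \<le> p - \<delta> / 2" using d1 by linarith
    then show False using dp by (simp add: p_def)
  qed
  define S where "S = {k. a k \<noteq> 0}"
  have "S \<subseteq> (\<lambda>j. n0 - j) ` {j. norm (a j) \<ge> p}"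
  proof
    fix k assume "k \<in> S"
    then have "norm (a (n0 - k)) \<ge> p" using key by (simp add: S_def)
    then show "k \<in> (\<lambda>j. n0 - j) ` {j. norm (a j) \<ge> p}" by (intro image_eqI[of _ _ "n0 - k"]) auto
  qed
  then have Sf: "finite S" using afin[OF pp] finite_surj by blast
  have conv: "a n = (\<Sum>k\<in>S. a k * a (n - k))" for n
  proof -
    have "norm (\<Phi> a n - (\<Sum>k\<in>S. a k * a (n - k))) \<le> 0"
      by (rule decomp[OF a_linf Sf]) (auto simp: S_def)
    then show ?thesis using Pa by simp
  qed
  have Sne: "S \<noteq> {}" using j0 by (auto simp: S_def)
  define Ux where "Ux = Max S"
  define L where "L = Min S"
  have US: "Ux \<in> S" "\<And>k. k \<in> S \<Longrightarrow> k \<le> Ux" using Sf Sne by (auto simp: Ux_def)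
  have LS: "L \<in> S" "\<And>k. k \<in> S \<Longrightarrow> L \<le> k" using Sf Sne by (auto simp: L_def)
  have "a (2 * Ux) = (\<Sum>k\<in>S. a k * a (2 * Ux - k))" by (rule conv)
  also have "\<dots> = (\<Sum>k\<in>S. if k = Ux then a Ux * a Ux else 0)"
  proof (rule sum.cong[OF refl])
    fix k assume k: "k \<in> S"
    show "a k * a (2 * Ux - k) = (if k = Ux then a Ux * a Ux else 0)"
    proof (cases "k = Ux")
      case False
      then have "k < Ux" using US(2)[OF k] by simp
      have "2 * Ux - k \<notin> S"
      proof
        assume "2 * Ux - k \<in> S"
        then have "2 * Ux - k \<le> Ux" using US(2) by blast
        with \<open>k < Ux\<close> show False by linarith
      qed
      then have z: "a (2 * Ux - k) = 0" unfolding S_def by simp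
      have "a k * a (2 * Ux - k) = 0" by (simp only: z mult_zero_right)
      moreover have "(if k = Ux then a Ux * a Ux else 0) = 0" using False by (rule if_not_P)
      ultimately show ?thesis by (rule trans[OF _ sym])
    next
      case True
      then have "2 * Ux - k = Ux" by linarith
      with True show ?thesis by simp
    qed
  qed
  also have "\<dots> = a Ux * a Ux" using Sf US(1) by simp
  finally have "a (2 * Ux) = a Ux * a Ux" .
  then have "2 * Ux \<in> S" using US(1) by (simp add: S_def)
  then have U0: "Ux \<le> 0" using US(2) by fastforce
  have "a (2 * L) = (\<Sum>k\<in>S. a k * a (2 * L - k))" by (rule conv)
  also have "\<dots> = (\<Sum>k\<in>S. if k = L then a L * a L else 0)"
  proof (rule sum.cong[OF refl])
    fix k assume k: "k \<in> S"
    show "a k * a (2 * L - k) = (if k = L then a L * a L else 0)"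
    proof (cases "k = L")
      case False
      then have "k > L" using LS(2)[OF k] by simp
      have "2 * L - k \<notin> S"
      proof
        assume "2 * L - k \<in> S"
        then have "2 * L - k \<ge> L" using LS(2) by blast
        with \<open>k > L\<close> show False by linarith
      qed
      then have z: "a (2 * L - k) = 0" unfolding S_def by simp
      have "a k * a (2 * L - k) = 0" by (simp only: z mult_zero_right)
      moreover have "(if k = L then a L * a L else 0) = 0" using False by (rule if_not_P)
      ultimately show ?thesis by (rule trans[OF _ sym])
    next
      case True
      then have "2 * L - k = L" by linarith
      with True show ?thesis by simp
    qed
  qed
  also have "\<dots> = a L * a L" using Sf LS(1) by simp
  finally have "a (2 * L) = a L * a L" .
  then have "2 * L \<in> S" using LS(1) by (simp add: S_def)
  then have L0: "L \<ge> 0" using LS(2) by fastforce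
  have k0: "k = 0" if "k \<in> S" for k using US(2)[OF that] LS(2)[OF that] U0 L0 by linarith
  have S0: "S = {0}" using k0 Sne by blast
  have "a 0 = (\<Sum>k\<in>S. a k * a (0 - k))" by (rule conv)
  also have "\<dots> = a 0 * a 0" using S0 by simp
  finally have "a 0 = a 0 * a 0" .
  moreover have "a 0 \<noteq> 0"
  proof -
    have "(0::int) \<in> S" using S0 by simp
    then show ?thesis unfolding S_def by simp
  qed
  ultimately have a01: "a 0 = 1" by (metis mult_cancel_left1)
  show ?thesis
  proof
    fix m
    show "a m = ee 0 m"
    proof (cases "m = 0")
      case True
      then show ?thesis using a01 by (simp add: ee_def)
    next
      case False
      then have "m \<notin> S" using S0 by simp
      then have "a m = 0" unfolding S_def by simp
      then show ?thesis using False by (simp add: ee_def)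
    qed
  qed
qed

end

theorem corollary2p4:
  fixes \<Phi> :: "(int \<Rightarrow> complex) \<Rightarrow> (int \<Rightarrow> complex)"
  assumes lin: "linear_on_linf \<Phi>"
    and comm: "\<forall>v\<in>linf. \<Phi> (bshift v) = bshift (\<Phi> v)"
    and idem: "\<forall>v\<in>linf. \<Phi> (\<Phi> v) = \<Phi> v"
    and contr: "\<forall>v\<in>linf. supnorm (\<Phi> v) \<le> supnorm v"
  shows "(\<forall>v\<in>c0. \<Phi> v = (\<lambda>n. 0)) \<or> (\<forall>v\<in>linf. \<Phi> v = v)"
proof -
  interpret ctx \<Phi> using assms by (unfold_locales) auto
  show ?thesis
  proof (cases "\<forall>j. a j = 0")
    case True
    then show ?thesis using zero_case by blast
  next
    case False
    then obtain j0 where "a j0 \<noteq> 0" by blast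
    then show ?thesis using nonzero_case ident_case by blast
  qed
qed

end
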